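(* For every $n$ and every $D\le n^{1/4}$, there exists an unweighted directed graph $G$ with $\Theta(n)$ vertices and diameter $D$ such that every subgraph $H$ of $G$ on the same vertex set with $\mathrm{diam}(H)<1.5\,\mathrm{diam}(G)-1$ contains $\Omega(n^{1.5})$ edges.
   Context: $\mathrm{diam}(G)=\max_{u,v}d_G(u,v)$ where $d_G(u,v)$ is the directed shortest-path distance. A subgraph of $G=(V,E)$ is a graph $(V,E')$ with $E'\subseteq E$. *)

theory Defs
  imports Main "HOL-Library.Extended_Nat"
begin

definition digraph :: "'a set \<Rightarrow> ('a \<times> 'a) set \<Rightarrow> bool" where
  "digraph V E \<longleftrightarrow> finite V \<and> E \<subseteq> V \<times> V"

definition ddist :: "('a \<times> 'a) set \<Rightarrow> 'a \<Rightarrow> 'a \<Rightarrow> enat" where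
  "ddist E u v = (if \<exists>k. (u, v) \<in> E ^^ k then enat (LEAST k. (u, v) \<in> E ^^ k) else \<infinity>)"

definition diam :: "'a set \<Rightarrow> ('a \<times> 'a) set \<Rightarrow> enat" where
  "diam V E = (SUP u\<in>V. SUP v\<in>V. ddist E u v)"

end

theory Submission
  imports Defs "HOL-Library.Countable" Complex_Main
begin


lemma ddist_le_walk: "(u,v) \<in> E ^^ j \<Longrightarrow> ddist E u v \<le> enat j"
  unfolding ddist_def by (auto intro: Least_le)

lemma ddist_le_enatD: "ddist E u v \<le> enat k \<Longrightarrow> \<exists>j\<le>k. (u,v) \<in> E ^^ j"
proof -
  assume h: "ddist E u v \<le> enat k"
  show ?thesis
  proof (cases "\<exists>j. (u,v) \<in> E ^^ j")
    case True
    then have "(u,v) \<in> E ^^ (LEAST j. (u,v) \<in> E ^^ j)" by (rule LeastI_ex)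
    moreover have "(LEAST j. (u,v) \<in> E ^^ j) \<le> k" using h True by (simp add: ddist_def)
    ultimately show ?thesis by blast
  next
    case False then show ?thesis using h by (simp add: ddist_def)
  qed
qed

lemma ddist_ge: "(\<And>j. j < D \<Longrightarrow> (u,v) \<notin> E ^^ j) \<Longrightarrow> enat D \<le> ddist E u v"
proof -
  assume h: "\<And>j. j < D \<Longrightarrow> (u,v) \<notin> E ^^ j"
  show ?thesis
  proof (cases "\<exists>j. (u,v) \<in> E ^^ j")
    case True
    then have "(u,v) \<in> E ^^ (LEAST j. (u,v) \<in> E ^^ j)" by (rule LeastI_ex)
    then have "\<not> (LEAST j. (u,v) \<in> E ^^ j) < D" using h by blast
    then show ?thesis using True by (simp add: ddist_def)
  next
    case False then show ?thesis by (simp add: ddist_def)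
  qed
qed

lemma diam_ge: "u \<in> V \<Longrightarrow> v \<in> V \<Longrightarrow> ddist E u v \<le> diam V E"
  unfolding diam_def by (meson SUP_upper SUP_upper2)

lemma diam_le: "(\<And>u v. u \<in> V \<Longrightarrow> v \<in> V \<Longrightarrow> ddist E u v \<le> x) \<Longrightarrow> diam V E \<le> x"
  unfolding diam_def by (simp add: SUP_least)

lemma diam_eqI:
  assumes "\<And>u v. u \<in> V \<Longrightarrow> v \<in> V \<Longrightarrow> ddist E u v \<le> enat D"
    and "u0 \<in> V" "v0 \<in> V" "\<And>j. j < D \<Longrightarrow> (u0,v0) \<notin> E ^^ j"
  shows "diam V E = enat D"
proof (rule antisym)
  show "diam V E \<le> enat D" using assms(1) by (rule diam_le)
  have "enat D \<le> ddist E u0 v0" using assms(4) by (rule ddist_ge)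
  also have "\<dots> \<le> diam V E" using assms(2,3) by (rule diam_ge)
  finally show "enat D \<le> diam V E" .
qed

lemma relpow_mono': "E' \<subseteq> (E::('a\<times>'a) set) \<Longrightarrow> (u,v) \<in> E' ^^ j \<Longrightarrow> (u,v) \<in> E ^^ j"
proof (induction j arbitrary: v)
  case 0 then show ?case by auto
next
  case (Suc j)
  then obtain w where "(u,w) \<in> E'^^j" "(w,v) \<in> E'" by auto
  with Suc show ?case by auto
qed

lemma pot:
  assumes "\<And>u v. (u,v) \<in> F \<Longrightarrow> \<phi> v \<le> \<phi> u + (1::nat)"
  shows "(u,v) \<in> F ^^ k \<Longrightarrow> \<phi> v \<le> \<phi> u + k"
proof (induction k arbitrary: v)
  case 0 then show ?case by simp
next
  case (Suc k)
  then obtain w where "(u,w) \<in> F^^k" "(w,v) \<in> F" by auto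
  with Suc.IH[of w] assms[of w v] show ?case by simp
qed

lemma relpow_image: "(u,v) \<in> E^^j \<Longrightarrow> (f u, f v) \<in> ((\<lambda>(a,b). (f a, f b)) ` E)^^j"
proof (induction j arbitrary: v)
  case 0 then show ?case by simp
next
  case (Suc j)
  then obtain w where "(u,w) \<in> E^^j" "(w,v) \<in> E" by auto
  with Suc.IH[of w] show ?case by (auto intro: relpow_Suc_I)
qed

datatype vert = X nat nat | Y nat nat | H nat
instance vert :: countable by countable_datatype




locale constr = fixes m a b :: nat
  assumes m1: "m \<ge> 1" and a1: "a \<ge> 1" and ab1: "a \<le> b" and ab2: "b \<le> a+1"
begin

definition V0 :: "vert set" where
  "V0 = (\<lambda>(i,t). X i t) ` ({..<m} \<times> {..a}) \<union> (\<lambda>(j,t). Y j t) ` ({..<m} \<times> {..b}) \<union> H ` {..a-1}"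

lemma inV0[simp]: "X i t \<in> V0 \<longleftrightarrow> i < m \<and> t \<le> a" "Y j t \<in> V0 \<longleftrightarrow> j < m \<and> t \<le> b"
  "H k \<in> V0 \<longleftrightarrow> k \<le> a - 1"
  by (auto simp: V0_def)

definition E0 :: "(vert \<times> vert) set" where
  "E0 = {(X i t, X i (Suc t)) | i t. i<m \<and> t<a}
   \<union> {(Y j t, Y j (Suc t)) | j t. j<m \<and> t<b}
   \<union> {(X i a, Y j 0) | i j. i<m \<and> j<m}
   \<union> {(X i a, H 0) | i. i<m}
   \<union> {(Y j t, H 0) | j t. j<m \<and> t\<le>b}
   \<union> {(H k, H (Suc k)) | k. Suc k \<le> a - 1}
   \<union> {(H (a-1), X i t) | i t. i<m \<and> t\<le>a}
   \<union> {(H (a-1), Y j 0) | j. j<m}"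

lemma E0_sub: "E0 \<subseteq> V0 \<times> V0"
  unfolding E0_def by auto

lemma finV0: "finite V0" unfolding V0_def by auto

lemma cardV0: "card V0 = m*(a+1) + m*(b+1) + a"
proof -
  have c1: "card ((\<lambda>(i,t). X i t) ` ({..<m} \<times> {..a})) = m*(a+1)"
    by (subst card_image) (auto simp: inj_on_def card_cartesian_product)
  have c2: "card ((\<lambda>(i,t). Y i t) ` ({..<m} \<times> {..b})) = m*(b+1)"
    by (subst card_image) (auto simp: inj_on_def card_cartesian_product)
  have c3: "card (H ` {..a-1}) = a"
  proof -
    have "card (H ` {..a-1}) = card {..a-1}" by (rule card_image) (auto simp: inj_on_def)
    then show ?thesis using a1 by simp
  qed
  show ?thesis unfolding V0_def
    by (subst card_Un_disjoint, force, force, force)+ (use c1 c2 c3 in simp)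
qed

fun psi :: "nat \<Rightarrow> nat \<Rightarrow> vert \<Rightarrow> nat" where
  "psi i0 j0 (X i t) = (if i = i0 then t else 2*a+1)"
| "psi i0 j0 (Y j u) = (if j = j0 then 2*a+1+u else a+1+u)"
| "psi i0 j0 (H k) = a+1+k"

lemma psi_ok: "(u,v) \<in> E0 \<Longrightarrow> (u,v) \<noteq> (X i0 a, Y j0 0) \<Longrightarrow> psi i0 j0 v \<le> psi i0 j0 u + 1"
  unfolding E0_def using a1 by (auto split: if_splits)

definition R :: "vert \<Rightarrow> vert \<Rightarrow> nat \<Rightarrow> bool" where
  "R v w k \<longleftrightarrow> (\<exists>j\<le>k. (v,w) \<in> E0^^j)"

lemma R_refl: "R v v k" unfolding R_def by (rule exI[of _ 0]) auto

lemma R_edge: "(v,w) \<in> E0 \<Longrightarrow> 1 \<le> k \<Longrightarrow> R v w k"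
  unfolding R_def by (rule exI[of _ 1]) auto

lemma R_trans: "R u v k1 \<Longrightarrow> R v w k2 \<Longrightarrow> R u w (k1+k2)"
  unfolding R_def by (auto simp: relpow_add intro!: add_mono) (metis add_mono relcomp.relcompI relpow_add)

lemma R_mono: "R u v k1 \<Longrightarrow> k1 \<le> k2 \<Longrightarrow> R u v k2"
  unfolding R_def by (meson le_trans)

lemma R_X: "i < m \<Longrightarrow> t + d \<le> a \<Longrightarrow> R (X i t) (X i (t+d)) d"
proof (induction d)
  case 0 then show ?case by (simp add: R_refl)
next
  case (Suc d)
  have "R (X i t) (X i (t+d)) d" using Suc by simp
  moreover have "R (X i (t+d)) (X i (t+Suc d)) 1" using Suc by (intro R_edge) (auto simp: E0_def)
  ultimately show ?case using R_trans by fastforce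
qed

lemma R_Y: "j < m \<Longrightarrow> t + d \<le> b \<Longrightarrow> R (Y j t) (Y j (t+d)) d"
proof (induction d)
  case 0 then show ?case by (simp add: R_refl)
next
  case (Suc d)
  have "R (Y j t) (Y j (t+d)) d" using Suc by simp
  moreover have "R (Y j (t+d)) (Y j (t+Suc d)) 1" using Suc by (intro R_edge) (auto simp: E0_def)
  ultimately show ?case using R_trans by fastforce
qed

lemma R_H: "k + d \<le> a - 1 \<Longrightarrow> R (H k) (H (k+d)) d"
proof (induction d)
  case 0 then show ?case by (simp add: R_refl)
next
  case (Suc d)
  have "R (H k) (H (k+d)) d" using Suc by simp
  moreover have "R (H (k+d)) (H (k+Suc d)) 1" using Suc by (intro R_edge) (auto simp: E0_def)
  ultimately show ?case using R_trans by fastforce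
qed

lemma R_X': "i < m \<Longrightarrow> t \<le> u \<Longrightarrow> u \<le> a \<Longrightarrow> R (X i t) (X i u) (u - t)"
  using R_X[of i t "u-t"] by simp
lemma R_Y': "j < m \<Longrightarrow> t \<le> u \<Longrightarrow> u \<le> b \<Longrightarrow> R (Y j t) (Y j u) (u - t)"
  using R_Y[of j t "u-t"] by simp
lemma R_H': "k \<le> k' \<Longrightarrow> k' \<le> a-1 \<Longrightarrow> R (H k) (H k') (k' - k)"
  using R_H[of k "k'-k"] by simp

lemma X_H0: "i < m \<Longrightarrow> t \<le> a \<Longrightarrow> R (X i t) (H 0) (a+1)"
proof -
  assume h: "i < m" "t \<le> a"
  have "R (X i t) (X i a) (a - t)" using h R_X' by auto
  moreover have "R (X i a) (H 0) 1" using h by (intro R_edge) (auto simp: E0_def)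
  ultimately show ?thesis using R_trans R_mono by fastforce
qed

lemma H_X: "k \<le> a-1 \<Longrightarrow> i < m \<Longrightarrow> u \<le> a \<Longrightarrow> R (H k) (X i u) (a - k)"
proof -
  assume h: "k \<le> a-1" "i < m" "u \<le> a"
  have "R (H k) (H (a-1)) (a - 1 - k)" using h R_H'[of k "a-1"] by simp
  moreover have "R (H (a-1)) (X i u) 1" using h by (intro R_edge) (auto simp: E0_def)
  ultimately have "R (H k) (X i u) (a-1-k+1)" using R_trans by blast
  then show ?thesis using h a1 by (simp add: R_mono)
qed

lemma H_Y: "k \<le> a-1 \<Longrightarrow> j < m \<Longrightarrow> u \<le> b \<Longrightarrow> R (H k) (Y j u) (a - k + u)"
proof -
  assume h: "k \<le> a-1" "j < m" "u \<le> b"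
  have "R (H k) (H (a-1)) (a - 1 - k)" using h R_H'[of k "a-1"] by simp
  moreover have "R (H (a-1)) (Y j 0) 1" using h by (intro R_edge) (auto simp: E0_def)
  moreover have "R (Y j 0) (Y j u) u" using h R_Y' by fastforce
  ultimately have "R (H k) (Y j u) (a-1-k+1+u)" using R_trans by blast
  then show ?thesis using h a1 by (simp add: R_mono)
qed

lemma H_H0: "k \<le> a-1 \<Longrightarrow> R (H k) (H 0) (a+1)"
proof -
  assume h: "k \<le> a-1"
  have "R (H k) (Y 0 0) (a - k)" using H_Y[of k 0 0] h m1 by simp
  moreover have "R (Y 0 0) (H 0) 1" using m1 by (intro R_edge) (auto simp: E0_def)
  ultimately show ?thesis using R_trans R_mono by fastforce
qed

lemma Y_H0: "j < m \<Longrightarrow> t \<le> b \<Longrightarrow> R (Y j t) (H 0) 1"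
  by (intro R_edge) (auto simp: E0_def)

lemma all_R: "v \<in> V0 \<Longrightarrow> w \<in> V0 \<Longrightarrow> R v w (a+b+1)"
proof -
  assume v: "v \<in> V0" and w: "w \<in> V0"
  show ?thesis
  proof (cases v)
    case (X i t)
    then have vi: "i < m" "t \<le> a" using v by auto
    show ?thesis
    proof (cases w)
      case (X i' u)
      then have "i' < m" "u \<le> a" using w by auto
      then have "R (H 0) w a" using H_X[of 0 i' u] X by simp
      moreover have "R v (H 0) (a+1)" using X_H0 vi \<open>v = _\<close> by simp
      ultimately show ?thesis using R_trans R_mono ab1 by fastforce
    next
      case (Y j u)
      then have wj: "j < m" "u \<le> b" using w by auto
      have "R v (X i a) (a - t)" using R_X' vi \<open>v = _\<close> by auto
      moreover have "R (X i a) (Y j 0) 1" using vi wj by (intro R_edge) (auto simp: E0_def)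
      moreover have "R (Y j 0) w u" using R_Y' wj Y by fastforce
      ultimately have "R v w (a - t + 1 + u)" using R_trans by blast
      then show ?thesis using wj by (simp add: R_mono)
    next
      case (H k)
      then have "k \<le> a - 1" using w by auto
      then have "R (H 0) w k" using R_H'[of 0 k] H by simp
      moreover have "R v (H 0) (a+1)" using X_H0 vi \<open>v = _\<close> by simp
      ultimately have "R v w (a+1+k)" using R_trans by blast
      then show ?thesis using \<open>k \<le> a-1\<close> ab1 by (simp add: R_mono)
    qed
  next
    case (Y j t)
    then have vj: "j < m" "t \<le> b" using v by auto
    then have v0: "R v (H 0) 1" using Y_H0 Y by simp
    show ?thesis
    proof (cases w)
      case (X i' u)
      then have "i' < m" "u \<le> a" using w by auto
      then have "R (H 0) w a" using H_X[of 0 i' u] X by simp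
      then show ?thesis using R_trans[OF v0] R_mono by fastforce
    next
      case (Y j' u)
      then have "j' < m" "u \<le> b" using w by auto
      then have "R (H 0) w (a+u)" using H_Y[of 0 j' u] Y by simp
      then show ?thesis using R_trans[OF v0] R_mono \<open>u \<le> b\<close> by fastforce
    next
      case (H k)
      then have "k \<le> a - 1" using w by auto
      then have "R (H 0) w k" using R_H'[of 0 k] H by simp
      then show ?thesis using R_trans[OF v0] R_mono \<open>k \<le> a-1\<close> by fastforce
    qed
  next
    case (H k)
    then have vk: "k \<le> a-1" using v by auto
    show ?thesis
    proof (cases w)
      case (X i' u)
      then have "i' < m" "u \<le> a" using w by auto
      then show ?thesis using H_X[OF vk] X H R_mono by fastforce
    next
      case (Y j' u)
      then have "j' < m" "u \<le> b" using w by auto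
      then have "R v w (a - k + u)" using H_Y[OF vk] Y H by simp
      then show ?thesis using \<open>u \<le> b\<close> by (simp add: R_mono)
    next
      case (H k')
      then have k': "k' \<le> a - 1" using w by auto
      show ?thesis
      proof (cases "k \<le> k'")
        case True
        have "R v w (k' - k)" using R_H'[OF True k'] \<open>v = _\<close> H by simp
        then show ?thesis using k' R_mono[of v w "k'-k" "a+b+1"] by simp
      next
        case False
        have "R (H 0) w k'" using R_H'[of 0 k'] H k' by simp
        then have "R v w (a+1+k')" using H_H0[OF vk] \<open>v = _\<close> R_trans by blast
        then show ?thesis using k' ab1 by (simp add: R_mono)
      qed
    qed
  qed
qed

end



context constr begin

definition VN :: "nat set" where "VN = to_nat ` V0"
definition EN :: "(nat \<times> nat) set" where "EN = (\<lambda>(u,v). (to_nat u, to_nat v)) ` E0"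

lemma EN_cases: "(p,q) \<in> EN \<Longrightarrow> \<exists>u v. p = to_nat u \<and> q = to_nat v \<and> (u,v) \<in> E0"
  unfolding EN_def by auto

lemma pot_EN:
  assumes F: "F \<subseteq> EN - {(to_nat (X i0 a), to_nat (Y j0 0))}"
    and w: "(to_nat x, to_nat y) \<in> F ^^ j"
  shows "psi i0 j0 y \<le> psi i0 j0 x + j"
proof -
  let ?\<phi> = "\<lambda>p. psi i0 j0 (inv to_nat p)"
  have "?\<phi> q \<le> ?\<phi> p + 1" if "(p,q) \<in> F" for p q
  proof -
    from that F have pq: "(p,q) \<in> EN" "(p,q) \<noteq> (to_nat (X i0 a), to_nat (Y j0 0))" by auto
    then obtain u v where uv: "p = to_nat u" "q = to_nat v" "(u,v) \<in> E0" using EN_cases by blast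
    then have "(u,v) \<noteq> (X i0 a, Y j0 0)" using pq by auto
    then show ?thesis using psi_ok[OF uv(3)] uv by simp
  qed
  from pot[of F ?\<phi>, OF this w] show ?thesis by simp
qed

lemma digraph_VN: "digraph VN EN"
  unfolding digraph_def VN_def EN_def using finV0 E0_sub by auto

lemma card_VN: "card VN = m*(a+1) + m*(b+1) + a"
  unfolding VN_def by (simp add: card_image inj_on_def cardV0)

lemma diam_VN: "diam VN EN = enat (a+b+1)"
proof (rule diam_eqI[of VN EN "a+b+1" "to_nat (X 0 0)" "to_nat (Y 0 b)"])
  fix p q assume "p \<in> VN" "q \<in> VN"
  then obtain v w where vw: "p = to_nat v" "q = to_nat w" "v \<in> V0" "w \<in> V0" unfolding VN_def by auto
  then obtain j where "j \<le> a+b+1" "(v,w) \<in> E0^^j" using all_R unfolding R_def by blast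
  then have "(p,q) \<in> EN^^j" using relpow_image vw unfolding EN_def by fastforce
  then show "ddist EN p q \<le> enat (a+b+1)" using \<open>j \<le> a+b+1\<close>
    by (meson ddist_le_walk enat_ord_simps(1) order_trans)
next
  show "to_nat (X 0 0) \<in> VN" "to_nat (Y 0 b) \<in> VN" unfolding VN_def using m1 by auto
next
  fix j assume j: "j < a+b+1"
  show "(to_nat (X 0 0), to_nat (Y 0 b)) \<notin> EN ^^ j"
  proof
    assume w: "(to_nat (X 0 0), to_nat (Y 0 b)) \<in> EN ^^ j"
    have sb: "EN \<subseteq> EN - {(to_nat (X 0 a), to_nat (Y m 0))}"
    proof
      fix e assume "e \<in> EN"
      then obtain u v where "e = (to_nat u, to_nat v)" "(u,v) \<in> E0" unfolding EN_def by auto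
      moreover have "v \<noteq> Y m 0" using E0_sub \<open>(u,v) \<in> E0\<close> by auto
      ultimately show "e \<in> EN - {(to_nat (X 0 a), to_nat (Y m 0))}" using \<open>e \<in> EN\<close> by auto
    qed
    have "psi 0 m (Y 0 b) \<le> psi 0 m (X 0 0) + j"
      by (rule pot_EN[OF sb w])
    then show False using j m1 by simp
  qed
qed

lemma crit:
  assumes "E' \<subseteq> EN" "diam VN E' = enat k" "real k < 3/2 * real (a+b+1) - 1"
  shows "m*m \<le> card E'"
proof -
  let ?C = "(\<lambda>(i,j). (to_nat (X i a), to_nat (Y j 0))) ` ({..<m}\<times>{..<m})"
  have sub: "?C \<subseteq> E'"
  proof
    fix e assume "e \<in> ?C"
    then obtain i0 j0 where ij: "i0 < m" "j0 < m" "e = (to_nat (X i0 a), to_nat (Y j0 0))" by auto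
    show "e \<in> E'"
    proof (rule ccontr)
      assume ne: "e \<notin> E'"
      have x0: "X i0 0 \<in> V0" and y0: "Y j0 b \<in> V0" using ij(1,2) by simp_all
      have "to_nat (X i0 0) \<in> VN" unfolding VN_def using x0 by (rule imageI)
      moreover have "to_nat (Y j0 b) \<in> VN" unfolding VN_def using y0 by (rule imageI)
      ultimately
      have "ddist E' (to_nat (X i0 0)) (to_nat (Y j0 b)) \<le> diam VN E'"
        by (rule diam_ge)
      then have dk: "ddist E' (to_nat (X i0 0)) (to_nat (Y j0 b)) \<le> enat k"
        unfolding assms(2) .
      from ddist_le_enatD[OF dk] obtain j where j: "j \<le> k" "(to_nat (X i0 0), to_nat (Y j0 b)) \<in> E' ^^ j"
        by blast
      have "E' \<subseteq> EN - {(to_nat (X i0 a), to_nat (Y j0 0))}" using assms(1) ne ij(3) by blast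
      from pot_EN[OF this j(2)] have "2*a+1+b \<le> j" by simp
      then have "2*a+1+b \<le> k" using j(1) by linarith
      then have "real (2*a+1+b) \<le> real k" by (rule of_nat_mono)
      then have r1: "2 * real a + 1 + real b \<le> real k" by simp
      have r2: "2 * real k < 3 * real a + 3 * real b + 1" using assms(3) by (simp add: field_simps)
      moreover have "real b \<le> real a + 1" using ab2 by simp
      ultimately show False using r1 r2 by linarith
    qed
  qed
  have "finite EN" unfolding EN_def using finV0 E0_sub finite_subset by (intro finite_imageI) blast
  then have fin: "finite E'" using assms(1) finite_subset by blast
  have "card ?C = m*m"
    by (subst card_image) (auto simp: inj_on_def card_cartesian_product)
  then show ?thesis using card_mono[OF fin sub] by simp
qed

end



lemma diam_lower_sub:
  assumes "E' \<subseteq> E" "u0 \<in> V" "v0 \<in> V" "\<And>j. j < D \<Longrightarrow> (u0,v0) \<notin> E ^^ j"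
  shows "enat D \<le> diam V E'"
proof -
  have "(u0,v0) \<notin> E' ^^ j" if "j < D" for j
  proof
    assume "(u0,v0) \<in> E' ^^ j"
    then have "(u0,v0) \<in> E ^^ j" by (rule relpow_mono'[OF assms(1)])
    with assms(4)[OF that] show False by contradiction
  qed
  then have "enat D \<le> ddist E' u0 v0" by (rule ddist_ge)
  also have "\<dots> \<le> diam V E'" using assms(2,3) by (rule diam_ge)
  finally show ?thesis .
qed

lemma small1:
  fixes n :: nat assumes "n \<ge> 1"
  shows "\<exists>(V::nat set) E. digraph V E \<and> card V = n+2 \<and> diam V E = enat 1 \<and>
     (\<forall>E'. E' \<subseteq> E \<longrightarrow> enat 1 \<le> diam V E')"
proof -
  define V :: "nat set" where "V = {0..n+1}"
  define E where "E = {(u,v). u \<in> V \<and> v \<in> V \<and> u \<noteq> v}"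
  have pair: "(0::nat) \<in> V" "(1::nat) \<in> V" by (auto simp: V_def)
  have nj: "((0::nat),(1::nat)) \<notin> E ^^ j" if "j < 1" for j
    using that by simp
  have "digraph V E" by (auto simp: digraph_def V_def E_def)
  moreover have "card V = n+2" by (simp add: V_def)
  moreover have "diam V E = enat 1"
  proof (rule diam_eqI[OF _ pair nj])
    fix u v assume "u \<in> V" "v \<in> V"
    show "ddist E u v \<le> enat 1"
    proof (cases "u = v")
      case True
      then have "(u,v) \<in> E^^0" by simp
      then show ?thesis by (rule order_trans[OF ddist_le_walk]) simp
    next
      case False
      then have "(u,v) \<in> E^^1" using \<open>u \<in> V\<close> \<open>v \<in> V\<close> by (simp add: E_def)
      then show ?thesis by (rule ddist_le_walk)
    qed
  qed
  moreover have "\<forall>E'. E' \<subseteq> E \<longrightarrow> enat 1 \<le> diam V E'"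
    using diam_lower_sub[OF _ pair nj] by blast
  ultimately show ?thesis by blast
qed

lemma small2:
  fixes n :: nat assumes "n \<ge> 1"
  shows "\<exists>(V::nat set) E. digraph V E \<and> card V = n+2 \<and> diam V E = enat 2 \<and>
     (\<forall>E'. E' \<subseteq> E \<longrightarrow> enat 2 \<le> diam V E')"
proof -
  define V :: "nat set" where "V = {0..n+1}"
  define E where "E = {(0,v) | v. v \<in> V \<and> v \<noteq> 0} \<union> {(v,0) | v. v \<in> V \<and> v \<noteq> 0}"
  have pair: "(1::nat) \<in> V" "(2::nat) \<in> V" using assms by (auto simp: V_def)
  have nj: "((1::nat),(2::nat)) \<notin> E ^^ j" if "j < 2" for j
  proof -
    have "j = 0 \<or> j = 1" using that by auto
    then show ?thesis by (auto simp: E_def)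
  qed
  have "digraph V E" by (auto simp: digraph_def V_def E_def)
  moreover have "card V = n+2" by (simp add: V_def)
  moreover have "diam V E = enat 2"
  proof (rule diam_eqI[OF _ pair nj])
    fix u v assume uv: "u \<in> V" "v \<in> V"
    have "\<exists>j\<le>2. (u,v) \<in> E^^j"
    proof (cases "u = v")
      case True
      then have "(u,v) \<in> E^^0" by simp
      then show ?thesis by (intro exI[of _ 0]) auto
    next
      case False
      show ?thesis
      proof (cases "u = 0 \<or> v = 0")
        case True
        then have "(u,v) \<in> E^^1" using uv False by (auto simp: E_def)
        then show ?thesis by (intro exI[of _ 1]) auto
      next
        case F2: False
        have "(u,0) \<in> E" "(0,v) \<in> E" using uv F2 by (auto simp: E_def)
        then have "(u,v) \<in> E^^2" by (auto simp: numeral_2_eq_2 relpow_Suc_I2 intro!: relpow_Suc_I2)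
        then show ?thesis by (intro exI[of _ 2]) auto
      qed
    qed
    then obtain j where "j \<le> 2" "(u,v) \<in> E^^j" by blast
    then show "ddist E u v \<le> enat 2"
      by (intro order_trans[OF ddist_le_walk]) simp_all
  qed
  moreover have "\<forall>E'. E' \<subseteq> E \<longrightarrow> enat 2 \<le> diam V E'"
    using diam_lower_sub[OF _ pair nj] by blast
  ultimately show ?thesis by blast
qed




lemma D_le_n:
  fixes n D :: nat assumes "n \<ge> 1" "real D \<le> real n powr (1/4)"
  shows "D \<le> n"
proof -
  have "real n powr (1/4) \<le> real n powr 1" using assms(1) by (intro powr_mono) auto
  then have "real D \<le> real n" using assms(2) by simp
  then show ?thesis by simp
qed

lemma numbound:
  fixes n D m :: nat
  assumes "n \<ge> 1" "D \<ge> 1" "real D \<le> real n powr (1/4)" "real n \<le> real m * real (D+1)"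
  shows "1/4 * real n powr (3/2) \<le> real (m*m)"
proof -
  define s where "s = real n powr (1/4)"
  have s0: "s > 0" using assms(1) by (simp add: s_def)
  have s4: "s^4 = real n" unfolding s_def using assms(1) by (simp add: powr_power)
  have s6: "s^6 = real n powr (3/2)" unfolding s_def using assms(1) by (simp add: powr_power)
  have "real (D+1) \<le> 2 * s" using assms(2,3) unfolding s_def by simp
  then have "s^4 \<le> real m * (2*s)" using assms(4) s4
    by (metis mult_left_mono of_nat_0_le_iff order_trans)
  then have "s * s^3 \<le> s * (2 * real m)" by (simp add: power_numeral_reduce algebra_simps)
  then have s3: "s^3 \<le> 2 * real m" using s0 by simp
  have "s^6 = (s^3)^2" by simp
  also have "\<dots> \<le> (2 * real m)^2" using s3 s0 by (intro power_mono) auto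
  finally have "real n powr (3/2) \<le> 4 * (real m * real m)" using s6 by (simp add: power2_eq_square)
  then show ?thesis by simp
qed

theorem theorem1p1:
  shows "\<exists>c1 c2 c3 :: real. c1 > 0 \<and> c2 > 0 \<and> c3 > 0 \<and>
    (\<forall>(n::nat) (D::nat). n \<ge> 1 \<longrightarrow> D \<ge> 1 \<longrightarrow> real D \<le> real n powr (1/4) \<longrightarrow>
      (\<exists>(V::nat set) E. digraph V E \<and>
         c1 * real n \<le> real (card V) \<and> real (card V) \<le> c2 * real n \<and>
         diam V E = enat D \<and>
         (\<forall>E'. E' \<subseteq> E \<longrightarrow>
            (\<exists>k. diam V E' = enat k \<and> real k < 3/2 * real D - 1) \<longrightarrow>
            real (card E') \<ge> c3 * real n powr (3/2))))"
proof (rule exI[of _ 1], rule exI[of _ 4], rule exI[of _ "1/4"], intro conjI allI impI)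
  fix n D :: nat
  assume n1: "n \<ge> 1" and D1: "D \<ge> 1" and Dn: "real D \<le> real n powr (1/4)"
  have Dle: "D \<le> n" using D_le_n[OF n1 Dn] .
  show "\<exists>(V::nat set) E. digraph V E \<and>
         1 * real n \<le> real (card V) \<and> real (card V) \<le> 4 * real n \<and>
         diam V E = enat D \<and>
         (\<forall>E'. E' \<subseteq> E \<longrightarrow>
            (\<exists>k. diam V E' = enat k \<and> real k < 3/2 * real D - 1) \<longrightarrow>
            real (card E') \<ge> 1/4 * real n powr (3/2))"
  proof (cases "D \<le> 2")
    case True
    have "\<exists>(V::nat set) E. digraph V E \<and> card V = n+2 \<and> diam V E = enat D \<and>
       (\<forall>E'. E' \<subseteq> E \<longrightarrow> enat D \<le> diam V E')"
    proof (cases "D = 1")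
      case True then show ?thesis using small1[OF n1] by simp
    next
      case False then have "D = 2" using \<open>D \<le> 2\<close> D1 by simp
      then show ?thesis using small2[OF n1] by simp
    qed
    then obtain V :: "nat set" and E where G: "digraph V E" "card V = n+2" "diam V E = enat D"
       "\<forall>E'. E' \<subseteq> E \<longrightarrow> enat D \<le> diam V E'" by blast
    show ?thesis
    proof (intro exI[of _ V] exI[of _ E] conjI allI impI)
      show "digraph V E" using G by simp
      show "diam V E = enat D" using G by simp
      show "1 * real n \<le> real (card V)" using G(2) n1 by simp
      show "real (card V) \<le> 4 * real n" using G(2) n1 by simp
      fix E' assume E': "E' \<subseteq> E" "\<exists>k. diam V E' = enat k \<and> real k < 3/2 * real D - 1"
      then obtain k where k: "diam V E' = enat k" "real k < 3/2 * real D - 1" by blast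
      have "enat D \<le> enat k" using G(4) E'(1) k(1) by metis
      then have "D \<le> k" by simp
      then have "real D \<le> real k" by simp
      then show "real (card E') \<ge> 1/4 * real n powr (3/2)" using k(2) \<open>D \<le> 2\<close> by simp
    qed
  next
    case False
    define a where "a = (D - 1) div 2"
    define b where "b = D - 1 - a"
    define m where "m = n div (D+1) + 1"
    have a1: "a \<ge> 1" using False unfolding a_def by simp
    have ab: "a \<le> b" "b \<le> a + 1" unfolding a_def b_def by auto
    have Dab: "D = a + b + 1" unfolding a_def b_def using False by auto
    interpret C: constr m a b using a1 ab by unfold_locales (auto simp: m_def)
    have nm: "n \<le> m * (D+1)"
    proof -
      have "n = n div (D+1) * (D+1) + n mod (D+1)" by (rule div_mult_mod_eq[symmetric])
      also have "\<dots> \<le> n div (D+1) * (D+1) + (D+1)" by (simp add: less_imp_le)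
      finally show ?thesis by (simp add: m_def algebra_simps)
    qed
    have "n div (D+1) * (D+1) \<le> n" using div_mult_mod_eq[of n "D+1"] by linarith
    then have mD: "m * (D+1) \<le> n + (D+1)" unfolding m_def by (simp add: algebra_simps)
    have cardV: "card C.VN = m * (D+1) + a" using C.card_VN Dab by (simp add: algebra_simps)
    show ?thesis
    proof (intro exI[of _ C.VN] exI[of _ C.EN] conjI allI impI)
      show "digraph C.VN C.EN" by (rule C.digraph_VN)
      show "diam C.VN C.EN = enat D" using C.diam_VN Dab by simp
      have "n \<le> card C.VN" using nm cardV by linarith
      then show "1 * real n \<le> real (card C.VN)" by simp
      have "card C.VN \<le> 4 * n" using cardV mD Dle n1 Dab by linarith
      then show "real (card C.VN) \<le> 4 * real n" by simp
      fix E' assume E': "E' \<subseteq> C.EN" "\<exists>k. diam C.VN E' = enat k \<and> real k < 3/2 * real D - 1"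
      then obtain k where k: "diam C.VN E' = enat k" "real k < 3/2 * real D - 1" by blast
      have mm: "m*m \<le> card E'" using C.crit[OF E'(1) k(1)] k(2) Dab by simp
      have nb: "1/4 * real n powr (3/2) \<le> real (m*m)"
      proof -
        have "real n \<le> real m * real (D+1)" using nm by (metis of_nat_le_iff of_nat_mult)
        from numbound[OF n1 D1 Dn this] show ?thesis .
      qed
      have "real (m*m) \<le> real (card E')" using mm by (rule of_nat_mono)
      then show "real (card E') \<ge> 1/4 * real n powr (3/2)" using nb by linarith
    qed
  qed
qed (simp_all)


end
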